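(* Let $(S,\curlyvee)$ be a $\curlyvee$-algebra. A non-empty subset $I\subseteq S$ is a $\lesssim$-ideal if and only if it is a down-set under $\lesssim$ such that $i\curlyvee j\in I$ whenever $i,j\in I$.
   Context: A $\curlyvee$-algebra is an algebra $(S,\curlyvee)$ with one binary operation such that, defining $a\sqcup b=a\curlyvee(a\curlyvee b)$ and $a\lesssim b$ iff $b\sqcup a=b$: $\sqcup$ is associative, $a\sqcup a=a$ and $a\sqcup b=(a\sqcup b)\sqcup a$; $\curlyvee$ is commutative and idempotent; $(a\curlyvee b)\sqcup(a\sqcup b)=a\sqcup b$; $a\sqcup(b\curlyvee c)=(a\sqcup b)\curlyvee(a\sqcup c)$; and if $d\lesssim a,b,c,a\curlyvee b,b\curlyvee c$ then $d\lesssim a\curlyvee c$. A $\lesssim$-ideal of $S$ is a non-empty subset $I$ that is a down-set under $\lesssim$ and satisfies $i\sqcup j\in I$ for all $i,j\in I$. *)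

theory Defs
  imports Main
begin

definition sqcup :: "('a \<Rightarrow> 'a \<Rightarrow> 'a) \<Rightarrow> 'a \<Rightarrow> 'a \<Rightarrow> 'a" where
  "sqcup v a b = v a (v a b)"

definition lesssim :: "('a \<Rightarrow> 'a \<Rightarrow> 'a) \<Rightarrow> 'a \<Rightarrow> 'a \<Rightarrow> bool" where
  "lesssim v a b \<longleftrightarrow> sqcup v b a = b"

definition vee_algebra :: "'a set \<Rightarrow> ('a \<Rightarrow> 'a \<Rightarrow> 'a) \<Rightarrow> bool" where
  "vee_algebra S v \<longleftrightarrow>
     (\<forall>a\<in>S. \<forall>b\<in>S. v a b \<in> S) \<and>
     (\<forall>a\<in>S. \<forall>b\<in>S. \<forall>c\<in>S. sqcup v (sqcup v a b) c = sqcup v a (sqcup v b c)) \<and>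
     (\<forall>a\<in>S. sqcup v a a = a) \<and>
     (\<forall>a\<in>S. \<forall>b\<in>S. sqcup v a b = sqcup v (sqcup v a b) a) \<and>
     (\<forall>a\<in>S. \<forall>b\<in>S. v a b = v b a) \<and>
     (\<forall>a\<in>S. v a a = a) \<and>
     (\<forall>a\<in>S. \<forall>b\<in>S. sqcup v (v a b) (sqcup v a b) = sqcup v a b) \<and>
     (\<forall>a\<in>S. \<forall>b\<in>S. \<forall>c\<in>S. sqcup v a (v b c) = v (sqcup v a b) (sqcup v a c)) \<and>
     (\<forall>a\<in>S. \<forall>b\<in>S. \<forall>c\<in>S. \<forall>d\<in>S.
        lesssim v d a \<and> lesssim v d b \<and> lesssim v d c \<and> lesssim v d (v a b) \<and> lesssim v d (v b c)
        \<longrightarrow> lesssim v d (v a c))"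

definition down_set :: "'a set \<Rightarrow> ('a \<Rightarrow> 'a \<Rightarrow> 'a) \<Rightarrow> 'a set \<Rightarrow> bool" where
  "down_set S v I \<longleftrightarrow> I \<subseteq> S \<and> (\<forall>x\<in>S. \<forall>i\<in>I. lesssim v x i \<longrightarrow> x \<in> I)"

definition lesssim_ideal :: "'a set \<Rightarrow> ('a \<Rightarrow> 'a \<Rightarrow> 'a) \<Rightarrow> 'a set \<Rightarrow> bool" where
  "lesssim_ideal S v I \<longleftrightarrow> I \<noteq> {} \<and> down_set S v I \<and> (\<forall>i\<in>I. \<forall>j\<in>I. sqcup v i j \<in> I)"

end

theory Submission
  imports Defs
begin

theorem proposition4p5:
  assumes "vee_algebra S v"
    and "I \<subseteq> S" and "I \<noteq> {}"
  shows "lesssim_ideal S v I \<longleftrightarrow> (down_set S v I \<and> (\<forall>i\<in>I. \<forall>j\<in>I. v i j \<in> I))"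
proof
  assume H: "lesssim_ideal S v I"
  have D: "down_set S v I" using H unfolding lesssim_ideal_def by blast
  have "v i j \<in> I" if i: "i \<in> I" and j: "j \<in> I" for i j
  proof -
    have iS: "i \<in> S" and jS: "j \<in> S" using i j assms(2) by auto
    have cl: "\<forall>a\<in>S. \<forall>b\<in>S. v a b \<in> S" using assms(1) unfolding vee_algebra_def by blast
    have sS: "sqcup v i j \<in> S" using cl iS jS unfolding sqcup_def by blast
    have vS: "v i j \<in> S" using cl iS jS by blast
    have s1: "sqcup v (sqcup v i j) i = sqcup v i j"
      using assms(1) iS jS unfolding vee_algebra_def by metis
    have s2: "sqcup v (sqcup v i j) j = sqcup v i j"
    proof -
      have "sqcup v (sqcup v i j) j = sqcup v i (sqcup v j j)"
        using assms(1) iS jS unfolding vee_algebra_def by blast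
      also have "\<dots> = sqcup v i j" using assms(1) jS unfolding vee_algebra_def by simp
      finally show ?thesis .
    qed
    have "sqcup v (sqcup v i j) (v i j) = v (sqcup v (sqcup v i j) i) (sqcup v (sqcup v i j) j)"
      using assms(1) iS jS sS unfolding vee_algebra_def by blast
    also have "\<dots> = sqcup v i j" using s1 s2 sS assms(1) unfolding vee_algebra_def by simp
    finally have "lesssim v (v i j) (sqcup v i j)" unfolding lesssim_def .
    moreover have "sqcup v i j \<in> I" using H i j unfolding lesssim_ideal_def by blast
    ultimately show ?thesis using D vS unfolding down_set_def by blast
  qed
  then show "down_set S v I \<and> (\<forall>i\<in>I. \<forall>j\<in>I. v i j \<in> I)" using D by blast
next
  assume H: "down_set S v I \<and> (\<forall>i\<in>I. \<forall>j\<in>I. v i j \<in> I)"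
  then show "lesssim_ideal S v I" using assms(3) unfolding lesssim_ideal_def sqcup_def by blast
qed

end
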